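(* Let $F:\mathbb{R}^n\rightrightarrows\mathbb{R}^p$ be a nearly convex set-valued mapping and $\Omega\subset\mathbb{R}^n$ a nearly convex set such that $\operatorname{ri}(\operatorname{dom} F)\cap\operatorname{ri}\Omega\neq\emptyset$. Then $$\operatorname{ri}\big(F(\Omega)\big)=\bigcup_{x\in(\operatorname{ri}\Omega)\cap\operatorname{ri}(\operatorname{dom} F)}\operatorname{ri} F(x),$$ where $F(\Omega)=\bigcup_{x\in\Omega}F(x)$.
   Context: A set $\Omega\subset\mathbb{R}^k$ is nearly convex if there is a convex set $C$ with $C\subset\Omega\subset\overline{C}$. For an arbitrary set $\Omega$, $\operatorname{ri}\Omega=\{a\in\Omega:\exists\delta>0,\ B(a;\delta)\cap\operatorname{aff}\Omega\subset\Omega\}$. For $F:\mathbb{R}^n\rightrightarrows\mathbb{R}^p$: $\operatorname{dom} F=\{x:F(x)\neq\emptyset\}$, $\operatorname{gph} F=\{(x,y):y\in F(x)\}$; $F$ is nearly convex if $\operatorname{gph} F$ is a nearly convex subset of $\mathbb{R}^n\times\mathbb{R}^p$. *)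

theory Defs
  imports "HOL-Analysis.Analysis"
begin

definition nearly_convex :: "'a::euclidean_space set \<Rightarrow> bool" where
  "nearly_convex \<Omega> \<longleftrightarrow> (\<exists>C. convex C \<and> C \<subseteq> \<Omega> \<and> \<Omega> \<subseteq> closure C)"

definition ri :: "'a::euclidean_space set \<Rightarrow> 'a set" where
  "ri \<Omega> = {a \<in> \<Omega>. \<exists>\<delta>>0. ball a \<delta> \<inter> affine hull \<Omega> \<subseteq> \<Omega>}"

definition sv_dom :: "('a \<Rightarrow> 'b set) \<Rightarrow> 'a set" where
  "sv_dom F = {x. F x \<noteq> {}}"

definition sv_gph :: "('a \<Rightarrow> 'b set) \<Rightarrow> ('a \<times> 'b) set" where
  "sv_gph F = {(x, y). y \<in> F x}"

definition nearly_convex_map :: "('a::euclidean_space \<Rightarrow> 'b::euclidean_space set) \<Rightarrow> bool" where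
  "nearly_convex_map F \<longleftrightarrow> nearly_convex (sv_gph F)"

end

theory Submission
  imports Defs
begin

lemma ri_eq: "ri S = rel_interior S"
  unfolding ri_def rel_interior_ball by auto

lemma nc_ri:
  fixes \<Omega> :: "'a::euclidean_space set"
  assumes "convex C" "C \<subseteq> \<Omega>" "\<Omega> \<subseteq> closure C"
  shows "rel_interior \<Omega> = rel_interior C"
proof -
  have ah: "affine hull \<Omega> = affine hull C"
  proof
    show "affine hull \<Omega> \<subseteq> affine hull C"
      using hull_mono[OF assms(3), of affine] closure_same_affine_hull[of C] by simp
    show "affine hull C \<subseteq> affine hull \<Omega>" using hull_mono[OF assms(2)] .
  qed
  have "rel_interior C \<subseteq> rel_interior \<Omega>"
    using rel_interior_mono[OF assms(2)] ah by simp
  moreover have "rel_interior \<Omega> \<subseteq> rel_interior (closure C)"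
    using rel_interior_mono[OF assms(3)] ah closure_same_affine_hull[of C] by simp
  ultimately show ?thesis using convex_rel_interior_closure[OF assms(1)] by auto
qed

lemma lin_fst: "linear fst" unfolding linear_iff by simp
lemma lin_snd: "linear snd" unfolding linear_iff by simp

theorem theorem3p1:
  fixes F :: "'n::euclidean_space \<Rightarrow> 'p::euclidean_space set"
    and \<Omega> :: "'n set"
  assumes "nearly_convex_map F"
    and "nearly_convex \<Omega>"
    and "ri (sv_dom F) \<inter> ri \<Omega> \<noteq> {}"
  shows "ri (\<Union>x\<in>\<Omega>. F x) = (\<Union>x\<in>ri \<Omega> \<inter> ri (sv_dom F). ri (F x))"
proof -
  obtain C where C: "convex C" "C \<subseteq> sv_gph F" "sv_gph F \<subseteq> closure C"
    using assms(1) unfolding nearly_convex_map_def nearly_convex_def by blast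
  obtain D where D: "convex D" "D \<subseteq> \<Omega>" "\<Omega> \<subseteq> closure D"
    using assms(2) unfolding nearly_convex_def by blast
  define fC where "fC = (\<lambda>y. {z. (y, z) \<in> C})"
  have domC: "{y. fC y \<noteq> {}} = fst ` C" unfolding fC_def by force
  have proj: "\<And>y z. (y, z) \<in> rel_interior C \<longleftrightarrow> (y \<in> rel_interior (fst ` C) \<and> z \<in> rel_interior (fC y))"
    using rel_interior_projection[OF C(1) fC_def] domC by simp
  have cfC: "convex (fC y)" for y
    unfolding convex_def fC_def
  proof (intro ballI allI impI, simp)
    fix a b :: 'p and u v :: real
    assume "(y, a) \<in> C" "(y, b) \<in> C" "0 \<le> u" "0 \<le> v" "u + v = 1"
    then have "u *\<^sub>R (y, a) + v *\<^sub>R (y, b) \<in> C" using C(1) unfolding convex_def by blast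
    moreover have "u *\<^sub>R (y, a) + v *\<^sub>R (y, b) = (y, u *\<^sub>R a + v *\<^sub>R b)"
      using \<open>u + v = 1\<close> by (simp add: scaleR_left_distrib[symmetric])
    ultimately show "(y, u *\<^sub>R a + v *\<^sub>R b) \<in> C" by simp
  qed
  have domF: "sv_dom F = fst ` sv_gph F"
    unfolding sv_dom_def sv_gph_def by force
  have riDom: "rel_interior (sv_dom F) = rel_interior (fst ` C)"
  proof (rule nc_ri)
    show "convex (fst ` C)" using C(1) convex_linear_image lin_fst by blast
    show "fst ` C \<subseteq> sv_dom F" using C(2) domF by auto
    have "fst ` sv_gph F \<subseteq> fst ` closure C" using C(3) by auto
    also have "\<dots> \<subseteq> closure (fst ` C)" using closure_linear_image_subset[OF lin_fst] .
    finally show "sv_dom F \<subseteq> closure (fst ` C)" using domF by simp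
  qed
  have riOm: "rel_interior \<Omega> = rel_interior D" using nc_ri[OF D] .
  have fib: "\<exists>z. (x, z) \<in> rel_interior C" if "x \<in> rel_interior (fst ` C)" for x
  proof -
    have "x \<in> fst ` C" using that rel_interior_subset by blast
    then have "fC x \<noteq> {}" unfolding fC_def by force
    then obtain z where "z \<in> rel_interior (fC x)"
      using rel_interior_eq_empty cfC by blast
    then show ?thesis using proj that by blast
  qed
  have riF: "rel_interior (F x) = rel_interior (fC x)" if x: "x \<in> rel_interior (fst ` C)" for x
  proof (rule nc_ri[OF cfC])
    show "fC x \<subseteq> F x" using C(2) unfolding fC_def sv_gph_def by auto
    obtain z where z: "(x, z) \<in> rel_interior C" using fib[OF x] by blast
    have T: "affine ({x} \<times> (UNIV::'p set))"
      unfolding affine_def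
    proof (intro ballI allI impI)
      fix p q :: "'n \<times> 'p" and u v :: real
      assume "p \<in> {x} \<times> UNIV" "q \<in> {x} \<times> UNIV" "u + v = 1"
      then show "u *\<^sub>R p + v *\<^sub>R q \<in> {x} \<times> UNIV"
        by (auto simp: scaleR_left_distrib[symmetric])
    qed
    have "rel_interior C \<inter> ({x} \<times> UNIV) \<noteq> {}" using z by blast
    then have cl: "closure (C \<inter> ({x} \<times> UNIV)) = closure C \<inter> ({x} \<times> UNIV)"
      using convex_affine_closure_Int[OF C(1) T] by blast
    have eq: "C \<inter> ({x} \<times> UNIV) = {x} \<times> fC x" unfolding fC_def by auto
    show "F x \<subseteq> closure (fC x)"
    proof
      fix y assume "y \<in> F x"
      then have "(x, y) \<in> closure C" using C(3) unfolding sv_gph_def by auto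
      then have "(x, y) \<in> closure ({x} \<times> fC x)" using cl eq by auto
      then show "y \<in> closure (fC x)" by (simp add: closure_Times)
    qed
  qed
  define K where "K = C \<inter> (D \<times> UNIV)"
  have cDU: "convex (D \<times> (UNIV::'p set))" using D(1) by (simp add: convex_Times)
  have riDU: "rel_interior (D \<times> (UNIV::'p set)) = rel_interior D \<times> UNIV"
    using rel_interior_Times[OF D(1) convex_UNIV] by simp
  obtain x0 where x0: "x0 \<in> rel_interior (fst ` C)" "x0 \<in> rel_interior D"
    using assms(3) riDom riOm unfolding ri_eq by auto
  obtain z0 where z0: "(x0, z0) \<in> rel_interior C" using fib[OF x0(1)] by blast
  have ne: "rel_interior C \<inter> rel_interior (D \<times> UNIV) \<noteq> {}"
    using z0 x0(2) riDU by blast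
  have cK: "convex K" unfolding K_def using C(1) cDU convex_Int by blast
  have clK: "closure K = closure C \<inter> closure (D \<times> UNIV)"
    unfolding K_def using closure_Int_convex[OF C(1) cDU ne] .
  have riK: "rel_interior K = rel_interior C \<inter> (rel_interior D \<times> UNIV)"
    unfolding K_def using convex_rel_interior_inter_two[OF C(1) cDU ne] riDU by simp
  have img: "(\<Union>x\<in>\<Omega>. F x) = snd ` (sv_gph F \<inter> (\<Omega> \<times> UNIV))"
    unfolding sv_gph_def by force
  have riImg: "rel_interior (\<Union>x\<in>\<Omega>. F x) = rel_interior (snd ` K)"
  proof (rule nc_ri)
    show "convex (snd ` K)" using cK convex_linear_image lin_snd by blast
    show "snd ` K \<subseteq> (\<Union>x\<in>\<Omega>. F x)" unfolding img K_def using C(2) D(2) by auto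
    have "sv_gph F \<inter> (\<Omega> \<times> UNIV) \<subseteq> closure K"
      unfolding clK closure_Times using C(3) D(3) by auto
    then have "snd ` (sv_gph F \<inter> (\<Omega> \<times> UNIV)) \<subseteq> snd ` closure K" by auto
    also have "\<dots> \<subseteq> closure (snd ` K)" using closure_linear_image_subset[OF lin_snd] .
    finally show "(\<Union>x\<in>\<Omega>. F x) \<subseteq> closure (snd ` K)" using img by simp
  qed
  have "rel_interior (snd ` K) = snd ` rel_interior K"
    using rel_interior_convex_linear_image[OF lin_snd cK] by simp
  also have "\<dots> = (\<Union>x\<in>rel_interior D \<inter> rel_interior (fst ` C). rel_interior (fC x))"
    unfolding riK using proj by force
  also have "\<dots> = (\<Union>x\<in>rel_interior D \<inter> rel_interior (fst ` C). rel_interior (F x))"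
    using riF by auto
  finally show ?thesis
    using riImg unfolding ri_eq riDom riOm by simp
qed

end
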